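(* Let $m\in\mathbb{N}$ and let $f\in C^m_{\mathrm{pol}}(\mathbb{R})$ be increasing, with $|f^{(n)}(x)|\lesssim1+|x|^p$ for all $n=0,1,\dots,m$. For $\lambda>0$ let $J_\lambda:=(I+\lambda f)^{-1}$ and $f_\lambda:=\lambda^{-1}(I-J_\lambda)$. Then: (i) $f_\lambda$ and $J_\lambda$ belong to $C^m(\mathbb{R})$; (ii) for $\lambda\le1$ there exists $q\in\mathbb{N}$, independent of $\lambda$, such that $|f^{(n)}_\lambda(x)|\lesssim1+|x|^q$ for all $n=0,1,\dots,m$ (with implicit constant independent of $\lambda$); (iii) $f^{(n)}_\lambda\to f^{(n)}$ pointwise as $\lambda\to0$, for $n=0,1,\dots,m$.
   Context: $f_\lambda$ is the Yosida approximation of the increasing function $f$ and $J_\lambda$ its resolvent. $C^m_{\mathrm{pol}}(\mathbb{R})$ is the space of $\phi\in C^m(\mathbb{R})$ with $\phi,\phi',\dots,\phi^{(m)}$ of polynomial growth. *)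

theory Defs
  imports "HOL-Analysis.Analysis"
begin

definition Cm :: "nat \<Rightarrow> (real \<Rightarrow> real) \<Rightarrow> bool" where
  "Cm m f \<longleftrightarrow> (\<forall>n<m. \<forall>x. ((deriv ^^ n) f) differentiable (at x))
                 \<and> continuous_on UNIV ((deriv ^^ m) f)"

definition resolvent :: "real \<Rightarrow> (real \<Rightarrow> real) \<Rightarrow> real \<Rightarrow> real" where
  "resolvent lam f y = (THE x. x + lam * f x = y)"

definition yosida :: "real \<Rightarrow> (real \<Rightarrow> real) \<Rightarrow> real \<Rightarrow> real" where
  "yosida lam f y = (y - resolvent lam f y) / lam"

end

theory Submission
  imports Defs
begin


definition polyb :: "real set \<Rightarrow> (real\<Rightarrow>real\<Rightarrow>real) \<Rightarrow> bool" where
 "polyb L G \<longleftrightarrow> (\<exists>C (q::nat). \<forall>l\<in>L. \<forall>y. \<bar>G l y\<bar> \<le> C * (1+\<bar>y\<bar>)^q)"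

fun Q :: "real set \<Rightarrow> nat \<Rightarrow> (real\<Rightarrow>real\<Rightarrow>real) \<Rightarrow> bool" where
 "Q L 0 G = (continuous_on (L \<times> UNIV) (\<lambda>z. G (fst z) (snd z)) \<and> polyb L G)"
| "Q L (Suc k) G = (Q L 0 G \<and> (\<forall>l\<in>L. \<forall>y. G l differentiable (at y)) \<and> Q L k (\<lambda>l y. deriv (G l) y))"

lemma dd: "(g::real\<Rightarrow>real) differentiable at y \<Longrightarrow> DERIV g y :> deriv g y"
  using DERIV_deriv_iff_real_differentiable by blast

lemma Q0: "Q L k G \<Longrightarrow> Q L 0 G"
  by (cases k) auto

lemma Q_Suc_down: "Q L (Suc k) G \<Longrightarrow> Q L k G"
proof (induction k arbitrary: G)
  case 0 then show ?case by simp
next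
  case (Suc k) then show ?case by (metis Q.simps(2))
qed

lemma Q_le: "j \<le> k \<Longrightarrow> Q L k G \<Longrightarrow> Q L j G"
proof (induction k rule: dec_induct)
  case base then show ?case .
next
  case (step n) then show ?case using Q_Suc_down by blast
qed

lemma polyb_cong: "(\<forall>l\<in>L. \<forall>y. G l y = H l y) \<Longrightarrow> polyb L G \<Longrightarrow> polyb L H"
  unfolding polyb_def by metis

lemma Q0_cong: "(\<forall>l\<in>L. \<forall>y. G l y = H l y) \<Longrightarrow> Q L 0 G \<Longrightarrow> Q L 0 H"
proof -
  assume e: "\<forall>l\<in>L. \<forall>y. G l y = H l y" and q: "Q L 0 G"
  have "continuous_on (L \<times> UNIV) (\<lambda>z. H (fst z) (snd z))"
  proof (rule continuous_on_eq)
    show "continuous_on (L \<times> UNIV) (\<lambda>z. G (fst z) (snd z))" using q by simp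
    show "\<And>z. z \<in> L \<times> UNIV \<Longrightarrow> G (fst z) (snd z) = H (fst z) (snd z)" using e by auto
  qed
  moreover have "polyb L H" using polyb_cong[OF e] q by simp
  ultimately show ?thesis by simp
qed

lemma Q_cong: "(\<forall>l\<in>L. \<forall>y. G l y = H l y) \<Longrightarrow> Q L k G \<Longrightarrow> Q L k H"
proof (induction k arbitrary: G H)
  case 0 then show ?case by (rule Q0_cong)
next
  case (Suc k)
  have e: "\<And>l. l \<in> L \<Longrightarrow> G l = H l" using Suc.prems(1) by auto
  have qd: "Q L k (\<lambda>l y. deriv (G l) y)" using Suc.prems(2) by simp
  have "\<forall>l\<in>L. \<forall>y. deriv (G l) y = deriv (H l) y" using e by simp
  from Suc.IH[OF this qd] have 1: "Q L k (\<lambda>l y. deriv (H l) y)" .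
  have 2: "Q L 0 H" using Q0_cong[OF Suc.prems(1)] Suc.prems(2) by simp
  have 3: "\<forall>l\<in>L. \<forall>y. H l differentiable (at y)" using Suc.prems(2) e by auto
  show ?case using 1 2 3 by simp
qed

lemma polyb_add: "polyb L G \<Longrightarrow> polyb L H \<Longrightarrow> polyb L (\<lambda>l y. G l y + H l y)"
proof -
  assume "polyb L G" "polyb L H"
  then obtain C1 q1 C2 q2 where 1: "\<forall>l\<in>L. \<forall>y. \<bar>G l y\<bar> \<le> C1 * (1+\<bar>y\<bar>)^q1"
    and 2: "\<forall>l\<in>L. \<forall>y. \<bar>H l y\<bar> \<le> C2 * (1+\<bar>y\<bar>)^q2" unfolding polyb_def by blast
  have "\<forall>l\<in>L. \<forall>y. \<bar>G l y + H l y\<bar> \<le> (\<bar>C1\<bar>+\<bar>C2\<bar>) * (1+\<bar>y\<bar>)^(q1+q2)"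
  proof (intro ballI allI)
    fix l and y :: real assume l: "l \<in> L"
    have p1: "(1+\<bar>y\<bar>)^q1 \<le> (1+\<bar>y\<bar>)^(q1+q2)" using power_increasing[of q1 "q1+q2" "1+\<bar>y::real\<bar>"] by simp
    have p2: "(1+\<bar>y\<bar>)^q2 \<le> (1+\<bar>y\<bar>)^(q1+q2)" using power_increasing[of q2 "q1+q2" "1+\<bar>y::real\<bar>"] by simp
    have a0: "0 \<le> (1+\<bar>y\<bar>)^q1" "0 \<le> (1+\<bar>y\<bar>)^q2" by simp_all
    have "C1 * (1+\<bar>y\<bar>)^q1 \<le> \<bar>C1\<bar> * (1+\<bar>y\<bar>)^q1" by (rule mult_right_mono[OF abs_ge_self a0(1)])
    also have "\<dots> \<le> \<bar>C1\<bar> * (1+\<bar>y\<bar>)^(q1+q2)" by (rule mult_left_mono[OF p1 abs_ge_zero])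
    finally have c1: "C1 * (1+\<bar>y\<bar>)^q1 \<le> \<bar>C1\<bar> * (1+\<bar>y\<bar>)^(q1+q2)" .
    have "C2 * (1+\<bar>y\<bar>)^q2 \<le> \<bar>C2\<bar> * (1+\<bar>y\<bar>)^q2" by (rule mult_right_mono[OF abs_ge_self a0(2)])
    also have "\<dots> \<le> \<bar>C2\<bar> * (1+\<bar>y\<bar>)^(q1+q2)" by (rule mult_left_mono[OF p2 abs_ge_zero])
    finally have c2: "C2 * (1+\<bar>y\<bar>)^q2 \<le> \<bar>C2\<bar> * (1+\<bar>y\<bar>)^(q1+q2)" .
    have g: "\<bar>G l y\<bar> \<le> C1 * (1+\<bar>y\<bar>)^q1" using 1 l by blast
    have h: "\<bar>H l y\<bar> \<le> C2 * (1+\<bar>y\<bar>)^q2" using 2 l by blast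
    have e: "(\<bar>C1\<bar>+\<bar>C2\<bar>) * (1+\<bar>y\<bar>)^(q1+q2) = \<bar>C1\<bar> * (1+\<bar>y\<bar>)^(q1+q2) + \<bar>C2\<bar> * (1+\<bar>y\<bar>)^(q1+q2)"
      by (simp add: distrib_right)
    have t: "\<bar>G l y + H l y\<bar> \<le> \<bar>G l y\<bar> + \<bar>H l y\<bar>" by (rule abs_triangle_ineq)
    show "\<bar>G l y + H l y\<bar> \<le> (\<bar>C1\<bar>+\<bar>C2\<bar>) * (1+\<bar>y\<bar>)^(q1+q2)"
      unfolding e using c1 c2 g h t by linarith
  qed
  then show ?thesis unfolding polyb_def by blast
qed

lemma polyb_mult: "polyb L G \<Longrightarrow> polyb L H \<Longrightarrow> polyb L (\<lambda>l y. G l y * H l y)"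
proof -
  assume "polyb L G" "polyb L H"
  then obtain C1 q1 C2 q2 where 1: "\<forall>l\<in>L. \<forall>y. \<bar>G l y\<bar> \<le> C1 * (1+\<bar>y\<bar>)^q1"
    and 2: "\<forall>l\<in>L. \<forall>y. \<bar>H l y\<bar> \<le> C2 * (1+\<bar>y\<bar>)^q2" unfolding polyb_def by blast
  have "\<forall>l\<in>L. \<forall>y. \<bar>G l y * H l y\<bar> \<le> (C1*C2) * (1+\<bar>y\<bar>)^(q1+q2)"
  proof (intro ballI allI)
    fix l and y :: real assume l: "l \<in> L"
    have "\<bar>G l y * H l y\<bar> = \<bar>G l y\<bar> * \<bar>H l y\<bar>" by (simp add: abs_mult)
    also have "\<dots> \<le> (C1 * (1+\<bar>y\<bar>)^q1) * (C2 * (1+\<bar>y\<bar>)^q2)"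
    proof (rule mult_mono)
      show g: "\<bar>G l y\<bar> \<le> C1 * (1+\<bar>y\<bar>)^q1" using 1 l by blast
      show "\<bar>H l y\<bar> \<le> C2 * (1+\<bar>y\<bar>)^q2" using 2 l by blast
      show "0 \<le> C1 * (1+\<bar>y\<bar>)^q1" using g abs_ge_zero[of "G l y"] by linarith
      show "0 \<le> \<bar>H l y\<bar>" by simp
    qed
    also have "\<dots> = (C1*C2) * (1+\<bar>y\<bar>)^(q1+q2)" by (simp add: power_add)
    finally show "\<bar>G l y * H l y\<bar> \<le> (C1*C2) * (1+\<bar>y\<bar>)^(q1+q2)" .
  qed
  then show ?thesis unfolding polyb_def by blast
qed

lemma Q0_add: "Q L 0 G \<Longrightarrow> Q L 0 H \<Longrightarrow> Q L 0 (\<lambda>l y. G l y + H l y)"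
  by (auto intro: continuous_on_add polyb_add)

lemma Q0_mult: "Q L 0 G \<Longrightarrow> Q L 0 H \<Longrightarrow> Q L 0 (\<lambda>l y. G l y * H l y)"
  by (auto intro: continuous_on_mult polyb_mult)

lemma QS: "Q L (Suc k) G \<longleftrightarrow> Q L 0 G \<and> (\<forall>l\<in>L. \<forall>y. G l differentiable (at y)) \<and> Q L k (\<lambda>l y. deriv (G l) y)"
  by simp

lemma Q_add: "Q L k G \<Longrightarrow> Q L k H \<Longrightarrow> Q L k (\<lambda>l y. G l y + H l y)"
proof (induction k arbitrary: G H)
  case 0 then show ?case by (rule Q0_add)
next
  case (Suc k)
  have dG: "\<forall>l\<in>L. \<forall>y. G l differentiable (at y)" and dH: "\<forall>l\<in>L. \<forall>y. H l differentiable (at y)"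
    using Suc.prems unfolding QS by blast+
  have d: "\<forall>l\<in>L. \<forall>y. deriv (G l) y + deriv (H l) y = deriv (\<lambda>y. G l y + H l y) y"
  proof (intro ballI allI)
    fix l y assume l: "l \<in> L"
    have "DERIV (\<lambda>y. G l y + H l y) y :> deriv (G l) y + deriv (H l) y"
      by (rule DERIV_add[OF dd dd]) (use dG dH l in blast)+
    then show "deriv (G l) y + deriv (H l) y = deriv (\<lambda>y. G l y + H l y) y"
      by (rule DERIV_imp_deriv[symmetric])
  qed
  have "Q L k (\<lambda>l y. deriv (G l) y)" "Q L k (\<lambda>l y. deriv (H l) y)"
    using Suc.prems unfolding QS by blast+
  then have "Q L k (\<lambda>l y. deriv (G l) y + deriv (H l) y)" by (rule Suc.IH)
  then have 1: "Q L k (\<lambda>l y. deriv (\<lambda>y. G l y + H l y) y)" by (rule Q_cong[OF d])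
  have 2: "Q L 0 (\<lambda>l y. G l y + H l y)" using Suc.prems Q0_add Q0 by blast
  have 3: "\<forall>l\<in>L. \<forall>y. (\<lambda>y. G l y + H l y) differentiable (at y)" using dG dH by auto
  show ?case unfolding QS using 1 2 3 by blast
qed

lemma Q_mult: "Q L k G \<Longrightarrow> Q L k H \<Longrightarrow> Q L k (\<lambda>l y. G l y * H l y)"
proof (induction k arbitrary: G H)
  case 0 then show ?case by (rule Q0_mult)
next
  case (Suc k)
  have dG: "\<forall>l\<in>L. \<forall>y. G l differentiable (at y)" and dH: "\<forall>l\<in>L. \<forall>y. H l differentiable (at y)"
    using Suc.prems unfolding QS by blast+
  have d: "\<forall>l\<in>L. \<forall>y. deriv (G l) y * H l y + G l y * deriv (H l) y = deriv (\<lambda>y. G l y * H l y) y"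
  proof (intro ballI allI)
    fix l y assume l: "l \<in> L"
    have "DERIV (\<lambda>y. G l y * H l y) y :> deriv (G l) y * H l y + deriv (H l) y * G l y"
      by (rule DERIV_mult[OF dd dd]) (use dG dH l in blast)+
    then have "deriv (\<lambda>y. G l y * H l y) y = deriv (G l) y * H l y + deriv (H l) y * G l y"
      by (rule DERIV_imp_deriv)
    then show "deriv (G l) y * H l y + G l y * deriv (H l) y = deriv (\<lambda>y. G l y * H l y) y"
      by (simp add: mult.commute)
  qed
  have G': "Q L k (\<lambda>l y. deriv (G l) y)" and H': "Q L k (\<lambda>l y. deriv (H l) y)"
    using Suc.prems unfolding QS by blast+
  have G: "Q L k G" and H: "Q L k H" using Suc.prems Q_Suc_down by blast+
  have "Q L k (\<lambda>l y. deriv (G l) y * H l y)" using G' H by (rule Suc.IH)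
  moreover have "Q L k (\<lambda>l y. G l y * deriv (H l) y)" using G H' by (rule Suc.IH)
  ultimately have "Q L k (\<lambda>l y. deriv (G l) y * H l y + G l y * deriv (H l) y)" by (rule Q_add)
  then have 1: "Q L k (\<lambda>l y. deriv (\<lambda>y. G l y * H l y) y)" by (rule Q_cong[OF d])
  have 2: "Q L 0 (\<lambda>l y. G l y * H l y)" using Suc.prems Q0_mult Q0 by blast
  have 3: "\<forall>l\<in>L. \<forall>y. (\<lambda>y. G l y * H l y) differentiable (at y)" using dG dH by auto
  show ?case unfolding QS using 1 2 3 by blast
qed

lemma Q_const: "continuous_on L c \<Longrightarrow> \<forall>l\<in>L. \<bar>c l\<bar> \<le> B \<Longrightarrow> Q L k (\<lambda>l y. c l)"
proof (induction k arbitrary: c B)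
  case 0
  have "continuous_on (L \<times> UNIV) (\<lambda>z. c (fst z))"
    by (rule continuous_on_compose2[OF 0(1) continuous_on_fst]) auto
  moreover have "polyb L (\<lambda>l y. c l)" unfolding polyb_def
    by (rule exI[of _ B], rule exI[of _ 0]) (use 0 in auto)
  ultimately show ?case by simp
next
  case (Suc k)
  have "Q L k (\<lambda>l y. (\<lambda>_. 0) l)" by (rule Suc.IH[of _ 0]) auto
  then have "Q L k (\<lambda>l y. deriv (\<lambda>y. c l) y)" by simp
  then show ?case using Suc.IH[OF Suc.prems] Q0 by auto
qed

lemma Q_id: "Q L k (\<lambda>l y. y)"
proof (induction k)
  case 0
  have "polyb L (\<lambda>l y. y)" unfolding polyb_def
    by (rule exI[of _ 1], rule exI[of _ 1]) auto
  then show ?case by (auto intro: continuous_intros)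
next
  case (Suc k)
  have "Q L k (\<lambda>l y. (\<lambda>_. 1) l)" by (rule Q_const[of _ _ 1]) auto
  then have "Q L k (\<lambda>l y. deriv (\<lambda>y. y) y)" by simp
  then show ?case using Suc Q0 by auto
qed



lemma funpow_deriv_Suc: "(deriv ^^ Suc n) f = deriv ((deriv ^^ n) f)" by simp

locale SS =
  fixes f :: "real \<Rightarrow> real" and m :: nat
  assumes Cmf: "Cm m f" and monof: "mono f"
    and grow: "\<exists>C (q::nat). \<forall>n\<le>m. \<forall>x. \<bar>(deriv^^n) f x\<bar> \<le> C*(1+\<bar>x\<bar>)^q"
begin

lemma f_diff: "n < m \<Longrightarrow> (deriv^^n) f differentiable (at x)"
  using Cmf unfolding Cm_def by blast

lemma f_cont: "n \<le> m \<Longrightarrow> continuous_on UNIV ((deriv^^n) f)"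
proof -
  assume n: "n \<le> m"
  show ?thesis
  proof (cases "n = m")
    case True then show ?thesis using Cmf unfolding Cm_def by blast
  next
    case False
    then have "n < m" using n by simp
    then have "\<forall>x. (deriv^^n) f differentiable (at x)" using f_diff by blast
    then show ?thesis by (simp add: differentiable_imp_continuous_on differentiable_on_def differentiable_at_withinI)
  qed
qed

lemma f_cont0: "continuous_on UNIV f"
  using f_cont[of 0] by simp

lemma Q_fd: "j + k \<le> m \<Longrightarrow> Q L k (\<lambda>l y. (deriv^^j) f y)"
proof (induction k arbitrary: j)
  case 0
  have c: "continuous_on (L \<times> UNIV) (\<lambda>z. (deriv^^j) f (snd z))"
    by (rule continuous_on_compose2[OF f_cont continuous_on_snd]) (use 0 in auto)
  obtain C and q :: nat where Cq: "\<forall>n\<le>m. \<forall>x. \<bar>(deriv^^n) f x\<bar> \<le> C*(1+\<bar>x\<bar>)^q" using grow by blast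
  have "polyb L (\<lambda>l y. (deriv^^j) f y)" unfolding polyb_def
    by (rule exI[of _ C], rule exI[of _ q]) (use Cq 0 in auto)
  then show ?case using c by simp
next
  case (Suc k)
  have 1: "Q L k (\<lambda>l y. deriv ((deriv^^j) f) y)" using Suc.IH[of "Suc j"] Suc.prems by simp
  have "Q L k (\<lambda>l y. (deriv^^j) f y)" by (rule Suc.IH) (use Suc.prems in simp)
  then have 2: "Q L 0 (\<lambda>l y. (deriv^^j) f y)" by (rule Q0)
  have 3: "\<forall>l\<in>L. \<forall>y. (\<lambda>y. (deriv^^j) f y) differentiable (at y)" using f_diff Suc.prems by auto
  show ?case unfolding QS using 1 2 3 by simp
qed

lemma fprime_nonneg: "1 \<le> m \<Longrightarrow> deriv f y \<ge> 0"
proof -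
  assume "1 \<le> m"
  then have "f differentiable (at y)" using f_diff[of 0] by simp
  then have "DERIV f y :> deriv f y" by (rule dd)
  then show ?thesis using mono_on_imp_deriv_nonneg[of UNIV f] monof by (simp add: mono_on_def monoD)
qed

definition u :: "real \<Rightarrow> real \<Rightarrow> real" where
  "u l y = 1 / (1 + l * deriv f y)"

lemma u_den: "1 \<le> m \<Longrightarrow> 0 \<le> l \<Longrightarrow> 1 + l * deriv f y \<ge> 1"
  using fprime_nonneg by simp

lemma Q_u: "0 \<le> b \<Longrightarrow> k + 1 \<le> m \<Longrightarrow> Q {0..b} k u"
proof (induction k)
  case 0
  have fc: "continuous_on UNIV (deriv f)" using f_cont[of 1] 0 by simp
  have c: "continuous_on ({0..b} \<times> UNIV) (\<lambda>z. 1 / (1 + fst z * deriv f (snd z)))"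
  proof (rule continuous_on_divide[OF continuous_on_const])
    have "continuous_on ({0..b} \<times> UNIV) (\<lambda>z. deriv f (snd z))"
      by (rule continuous_on_compose2[OF fc continuous_on_snd]) auto
    then show "continuous_on ({0..b} \<times> UNIV) (\<lambda>z. 1 + fst z * deriv f (snd z))"
      by (intro continuous_intros)
    show "\<forall>z\<in>{0..b} \<times> UNIV. 1 + fst z * deriv f (snd z) \<noteq> 0"
    proof
      fix z :: "real \<times> real" assume z: "z \<in> {0..b} \<times> UNIV"
      have "1 \<le> 1 + fst z * deriv f (snd z)" by (rule u_den) (use 0 z in auto)
      then show "1 + fst z * deriv f (snd z) \<noteq> 0" by simp
    qed
  qed
  have "polyb {0..b} u" unfolding polyb_def
  proof (rule exI[of _ 1], rule exI[of _ 0], intro ballI allI)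
    fix l y assume "l \<in> {0..b}"
    then have "1 + l * deriv f y \<ge> 1" using u_den 0 by auto
    then show "\<bar>u l y\<bar> \<le> 1 * (1 + \<bar>y\<bar>) ^ 0" unfolding u_def by simp
  qed
  then show ?case using c unfolding u_def by simp
next
  case (Suc k)
  have m2: "2 \<le> m" using Suc by simp
  have d: "\<forall>l\<in>{0..b}. \<forall>y. DERIV (u l) y :> (- l) * (deriv^^2) f y * u l y * u l y"
  proof (intro ballI allI)
    fix l y assume l: "l \<in> {0..b}"
    have den: "1 + l * deriv f y \<noteq> 0" using u_den[of l y] m2 l by auto
    have "deriv f differentiable (at y)" using f_diff[of 1 y] m2 by simp
    then have D1: "DERIV (deriv f) y :> (deriv^^2) f y" using dd[of "deriv f" y] by (simp add: numeral_2_eq_2)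
    have G: "DERIV (\<lambda>y. 1 + l * deriv f y) y :> 0 + l * (deriv^^2) f y"
      by (rule DERIV_add[OF DERIV_const DERIV_cmult[OF D1]])
    have "DERIV (\<lambda>y. inverse (1 + l * deriv f y)) y :>
           - ((0 + l * (deriv^^2) f y) * inverse ((1 + l * deriv f y) ^ Suc (Suc 0)))"
      by (rule DERIV_inverse_fun[OF G den])
    moreover have "u l = (\<lambda>y. inverse (1 + l * deriv f y))"
      by (rule ext) (simp add: u_def inverse_eq_divide)
    moreover have "- ((0 + l * (deriv^^2) f y) * inverse ((1 + l * deriv f y) ^ Suc (Suc 0)))
        = (- l) * (deriv^^2) f y * u l y * u l y"
      by (simp add: u_def inverse_eq_divide)
    ultimately show "DERIV (u l) y :> (- l) * (deriv^^2) f y * u l y * u l y" by (simp add: mult.assoc)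
  qed
  have q1: "Q {0..b} k (\<lambda>l y. - l)" by (rule Q_const[of _ _ b]) (use Suc in \<open>auto intro: continuous_intros\<close>)
  have q2: "Q {0..b} k (\<lambda>l y. (deriv^^2) f y)" by (rule Q_fd) (use Suc in simp)
  have q3: "Q {0..b} k u" using Suc by simp
  have "Q {0..b} k (\<lambda>l y. (- l) * (deriv^^2) f y * u l y * u l y)"
    by (intro Q_mult q1 q2 q3)
  then have 1: "Q {0..b} k (\<lambda>l y. deriv (u l) y)"
  proof (rule Q_cong[rotated], intro ballI allI)
    fix l y assume "l \<in> {0..b}"
    then have "DERIV (u l) y :> (- l) * (deriv^^2) f y * u l y * u l y" using d by blast
    then show "(- l) * (deriv^^2) f y * u l y * u l y = deriv (u l) y" by (rule DERIV_imp_deriv[symmetric])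
  qed
  have 3: "\<forall>l\<in>{0..b}. \<forall>y. u l differentiable (at y)"
    using d real_differentiable_def by blast
  show ?case unfolding QS using 1 Q0[OF q3] 3 by simp
qed

definition Dop :: "(real \<Rightarrow> real \<Rightarrow> real) \<Rightarrow> real \<Rightarrow> real \<Rightarrow> real" where
  "Dop G l y = deriv (G l) y * u l y"

definition Dit :: "nat \<Rightarrow> (real \<Rightarrow> real \<Rightarrow> real) \<Rightarrow> real \<Rightarrow> real \<Rightarrow> real" where
  "Dit n G = (Dop ^^ n) G"

lemma Dit_Suc: "Dit (Suc n) G = Dop (Dit n G)"
  unfolding Dit_def by simp

lemma Q_Dit: "0 \<le> b \<Longrightarrow> Q {0..b} k G \<Longrightarrow> k \<le> m \<Longrightarrow> n \<le> k \<Longrightarrow> Q {0..b} (k - n) (Dit n G)"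
proof (induction n)
  case 0 then show ?case by (simp add: Dit_def)
next
  case (Suc n)
  have e: "k - n = Suc (k - Suc n)" using Suc.prems by simp
  have q: "Q {0..b} (Suc (k - Suc n)) (Dit n G)" using Suc e by simp
  then have qd: "Q {0..b} (k - Suc n) (\<lambda>l y. deriv (Dit n G l) y)" by simp
  have qu: "Q {0..b} (k - Suc n) u" by (rule Q_u) (use Suc.prems in auto)
  have "Q {0..b} (k - Suc n) (\<lambda>l y. deriv (Dit n G l) y * u l y)" by (rule Q_mult[OF qd qu])
  then show ?case by (simp add: Dit_Suc Dop_def[abs_def])
qed

lemma Dit_zero: "Dit n G 0 = (deriv^^n) (G 0)"
proof (induction n)
  case 0 then show ?case by (simp add: Dit_def)
next
  case (Suc n)
  show ?case by (rule ext) (simp add: Dit_Suc Dop_def u_def Suc)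
qed

end


context SS begin

lemma h_mono: "0 \<le> lam \<Longrightarrow> x1 \<le> x2 \<Longrightarrow> lam * f x1 \<le> lam * f x2"
  using monof by (simp add: monoD mult_left_mono)

lemma res_ex: assumes lam: "0 \<le> lam" shows "\<exists>!x. x + lam * f x = y"
proof -
  define a where "a = y - lam * \<bar>f y\<bar>"
  define b where "b = y + lam * \<bar>f y\<bar>"
  have ab: "a \<le> y" "y \<le> b" using lam by (simp_all add: a_def b_def)
  have ha: "a + lam * f a \<le> y"
  proof -
    have "lam * f a \<le> lam * f y" by (rule h_mono[OF lam ab(1)])
    moreover have "lam * f y \<le> lam * \<bar>f y\<bar>" using lam by (simp add: mult_left_mono)
    ultimately show ?thesis unfolding a_def by linarith
  qed
  have hb: "y \<le> b + lam * f b"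
  proof -
    have "lam * f y \<le> lam * f b" by (rule h_mono[OF lam ab(2)])
    moreover have "- (lam * \<bar>f y\<bar>) \<le> lam * f y" using mult_left_mono[of "- \<bar>f y\<bar>" "f y" lam] lam by simp
    ultimately show ?thesis unfolding b_def by linarith
  qed
  have c: "continuous_on {a..b} (\<lambda>x. x + lam * f x)"
    using f_cont0 by (intro continuous_intros) (auto intro: continuous_on_subset)
  obtain x where "x + lam * f x = y" using IVT'[of "\<lambda>x. x + lam * f x", OF ha hb _ c] ab by auto
  moreover have "\<And>x1 x2. x1 + lam * f x1 = y \<Longrightarrow> x2 + lam * f x2 = y \<Longrightarrow> x1 = x2"
  proof -
    fix x1 x2 assume 1: "x1 + lam * f x1 = y" and 2: "x2 + lam * f x2 = y"
    show "x1 = x2"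
    proof (rule ccontr)
      assume "x1 \<noteq> x2"
      then consider "x1 < x2" | "x2 < x1" by linarith
      then show False
      proof cases
        case 1 then show ?thesis using h_mono[OF lam, of x1 x2] \<open>x1 + lam * f x1 = y\<close> 2 by linarith
      next
        case 2 then show ?thesis using h_mono[OF lam, of x2 x1] \<open>x1 + lam * f x1 = y\<close> \<open>x2 + lam * f x2 = y\<close> by linarith
      qed
    qed
  qed
  ultimately show ?thesis by blast
qed

lemma res_eq: "0 \<le> lam \<Longrightarrow> resolvent lam f y + lam * f (resolvent lam f y) = y"
  unfolding resolvent_def by (rule theI') (rule res_ex)

lemma res_aux: assumes lam: "0 \<le> lam" and le: "resolvent lam f y1 \<le> resolvent lam f y2"
  shows "resolvent lam f y2 - resolvent lam f y1 \<le> y2 - y1"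
  using res_eq[OF lam, of y1] res_eq[OF lam, of y2] h_mono[OF lam le] by linarith

lemma res_lip: assumes lam: "0 \<le> lam"
  shows "\<bar>resolvent lam f y1 - resolvent lam f y2\<bar> \<le> \<bar>y1 - y2\<bar>"
proof (cases "resolvent lam f y1 \<le> resolvent lam f y2")
  case True then show ?thesis using res_aux[OF lam True] by linarith
next
  case False then show ?thesis using res_aux[OF lam, of y2 y1] by linarith
qed

lemma res_cont: "0 \<le> lam \<Longrightarrow> continuous_on UNIV (resolvent lam f)"
  by (rule lipschitz_on_continuous_on[of 1], rule lipschitz_onI) (auto simp: dist_real_def res_lip)

lemma res_bound0: assumes lam: "0 \<le> lam" shows "\<bar>resolvent lam f 0\<bar> \<le> lam * \<bar>f 0\<bar>"
proof -
  let ?z = "resolvent lam f 0"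
  have e: "?z = - (lam * f ?z)" using res_eq[OF lam, of 0] by linarith
  show ?thesis
  proof (cases "0 \<le> ?z")
    case True
    then have "lam * f 0 \<le> lam * f ?z" by (rule h_mono[OF lam])
    moreover have "- (lam * \<bar>f 0\<bar>) \<le> lam * f 0" using mult_left_mono[of "- \<bar>f 0\<bar>" "f 0" lam] lam by simp
    ultimately show ?thesis using e True by linarith
  next
    case False
    then have "lam * f ?z \<le> lam * f 0" by (intro h_mono[OF lam]) simp
    moreover have "lam * f 0 \<le> lam * \<bar>f 0\<bar>" using lam by (simp add: mult_left_mono)
    ultimately show ?thesis using e False by linarith
  qed
qed

lemma res_bound: "0 \<le> lam \<Longrightarrow> \<bar>resolvent lam f y\<bar> \<le> \<bar>y\<bar> + lam * \<bar>f 0\<bar>"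
  using res_lip[of lam y 0] res_bound0[of lam] by linarith

lemma res_close: assumes lam: "0 \<le> lam" shows "\<bar>resolvent lam f y - y\<bar> \<le> lam * \<bar>f y\<bar>"
proof -
  let ?z = "resolvent lam f y"
  have e: "y - ?z = lam * f ?z" using res_eq[OF lam, of y] by linarith
  show ?thesis
  proof (cases "?z \<le> y")
    case True
    then have "lam * f ?z \<le> lam * f y" by (rule h_mono[OF lam])
    moreover have "lam * f y \<le> lam * \<bar>f y\<bar>" using lam by (simp add: mult_left_mono)
    ultimately show ?thesis using e True by linarith
  next
    case False
    then have "lam * f y \<le> lam * f ?z" by (intro h_mono[OF lam]) simp
    moreover have "- (lam * \<bar>f y\<bar>) \<le> lam * f y" using mult_left_mono[of "- \<bar>f y\<bar>" "f y" lam] lam by simp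
    ultimately show ?thesis using e False by linarith
  qed
qed

lemma res_deriv: assumes lam: "0 \<le> lam" and m1: "1 \<le> m"
  shows "DERIV (resolvent lam f) y :> u lam (resolvent lam f y)"
proof -
  let ?J = "resolvent lam f"
  have fd: "DERIV f (?J y) :> deriv f (?J y)" using f_diff[of 0 "?J y"] m1 dd by simp
  have hd: "DERIV (\<lambda>x. x + lam * f x) (?J y) :> 1 + lam * deriv f (?J y)"
    by (rule DERIV_add[OF DERIV_ident DERIV_cmult[OF fd]])
  have ne: "1 + lam * deriv f (?J y) \<noteq> 0" using u_den[OF m1 lam, of "?J y"] by simp
  have "DERIV ?J y :> inverse (1 + lam * deriv f (?J y))"
  proof (rule DERIV_inverse_function[where f="\<lambda>x. x + lam * f x" and g="?J" and x=y and a="y - 1" and b="y + 1", OF hd ne])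
    show "\<And>z. y - 1 < z \<Longrightarrow> z < y + 1 \<Longrightarrow> ?J z + lam * f (?J z) = z" using res_eq[OF lam] by blast
    show "isCont ?J y" using res_cont[OF lam] by (simp add: continuous_on_eq_continuous_at)
  qed auto
  then show ?thesis by (simp add: u_def inverse_eq_divide)
qed

lemma yosida_eq: "0 < lam \<Longrightarrow> yosida lam f = (\<lambda>y. f (resolvent lam f y))"
proof
  fix y assume lam: "0 < lam"
  have "y - resolvent lam f y = lam * f (resolvent lam f y)" using res_eq[of lam y] lam by simp
  then show "yosida lam f y = f (resolvent lam f y)" unfolding yosida_def using lam by simp
qed

end


lemma polyb_fin: fixes N :: nat and Gs :: "nat \<Rightarrow> real \<Rightarrow> real \<Rightarrow> real"
  shows "(\<forall>n\<le>N. polyb L (Gs n)) \<Longrightarrow>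
  \<exists>C (q::nat). 0 \<le> C \<and> (\<forall>n\<le>N. \<forall>l\<in>L. \<forall>y. \<bar>Gs n l y\<bar> \<le> C*(1+\<bar>y\<bar>)^q)"
proof (induction N)
  case 0
  then obtain C q where Cq: "\<forall>l\<in>L. \<forall>y. \<bar>Gs 0 l y\<bar> \<le> C*(1+\<bar>y\<bar>)^q" unfolding polyb_def by auto
  have "\<forall>l\<in>L. \<forall>y. \<bar>Gs 0 l y\<bar> \<le> \<bar>C\<bar>*(1+\<bar>y\<bar>)^q"
  proof (intro ballI allI)
    fix l and y :: real assume "l \<in> L"
    then have "\<bar>Gs 0 l y\<bar> \<le> C*(1+\<bar>y\<bar>)^q" using Cq by blast
    also have "\<dots> \<le> \<bar>C\<bar>*(1+\<bar>y\<bar>)^q" by (rule mult_right_mono) simp_all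
    finally show "\<bar>Gs 0 l y\<bar> \<le> \<bar>C\<bar>*(1+\<bar>y\<bar>)^q" .
  qed
  then show ?case by (intro exI[of _ "\<bar>C\<bar>"] exI[of _ q]) simp
next
  case (Suc N)
  then obtain C1 q1 where C1: "0 \<le> C1" "\<forall>n\<le>N. \<forall>l\<in>L. \<forall>y. \<bar>Gs n l y\<bar> \<le> C1*(1+\<bar>y\<bar>)^q1" by auto
  obtain C2 q2 where C2: "\<forall>l\<in>L. \<forall>y. \<bar>Gs (Suc N) l y\<bar> \<le> C2*(1+\<bar>y\<bar>)^q2"
    using Suc.prems unfolding polyb_def by auto
  have "\<forall>n\<le>Suc N. \<forall>l\<in>L. \<forall>y. \<bar>Gs n l y\<bar> \<le> (C1 + \<bar>C2\<bar>)*(1+\<bar>y\<bar>)^(q1+q2)"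
  proof (intro allI impI ballI)
    fix n l and y :: real assume n: "n \<le> Suc N" and l: "l \<in> L"
    have p1: "(1+\<bar>y\<bar>)^q1 \<le> (1+\<bar>y\<bar>)^(q1+q2)" using power_increasing[of q1 "q1+q2" "1+\<bar>y::real\<bar>"] by simp
    have p2: "(1+\<bar>y\<bar>)^q2 \<le> (1+\<bar>y\<bar>)^(q1+q2)" using power_increasing[of q2 "q1+q2" "1+\<bar>y::real\<bar>"] by simp
    have a0: "0 \<le> (1+\<bar>y\<bar>)^(q1+q2)" by simp
    have e: "(C1 + \<bar>C2\<bar>)*(1+\<bar>y\<bar>)^(q1+q2) = C1*(1+\<bar>y\<bar>)^(q1+q2) + \<bar>C2\<bar>*(1+\<bar>y\<bar>)^(q1+q2)"
      by (simp add: distrib_right)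
    have m1: "0 \<le> \<bar>C2\<bar>*(1+\<bar>y\<bar>)^(q1+q2)" by simp
    have m2: "0 \<le> C1*(1+\<bar>y\<bar>)^(q1+q2)" using C1(1) by simp
    show "\<bar>Gs n l y\<bar> \<le> (C1 + \<bar>C2\<bar>)*(1+\<bar>y\<bar>)^(q1+q2)"
    proof (cases "n \<le> N")
      case True
      then have "\<bar>Gs n l y\<bar> \<le> C1*(1+\<bar>y\<bar>)^q1" using C1 l by blast
      also have "\<dots> \<le> C1*(1+\<bar>y\<bar>)^(q1+q2)" by (rule mult_left_mono[OF p1 C1(1)])
      finally show ?thesis using e m1 by linarith
    next
      case False
      then have "n = Suc N" using n by simp
      then have "\<bar>Gs n l y\<bar> \<le> C2*(1+\<bar>y\<bar>)^q2" using C2 l by blast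
      also have "\<dots> \<le> \<bar>C2\<bar>*(1+\<bar>y\<bar>)^q2" by (rule mult_right_mono) simp_all
      also have "\<dots> \<le> \<bar>C2\<bar>*(1+\<bar>y\<bar>)^(q1+q2)" by (rule mult_left_mono[OF p2]) simp
      finally show ?thesis using e m2 by linarith
    qed
  qed
  then show ?case using C1(1) by (intro exI[of _ "C1 + \<bar>C2\<bar>"] exI[of _ "q1+q2"]) simp
qed

lemma pow_bound: "(1+\<bar>x::real\<bar>)^q \<le> 2^q*(1+\<bar>x\<bar>^q)"
proof (cases "\<bar>x\<bar> \<le> 1")
  case True
  have "(1+\<bar>x\<bar>)^q \<le> 2^q" by (rule power_mono) (use True in simp_all)
  also have "\<dots> \<le> 2^q*(1+\<bar>x\<bar>^q)" by simp
  finally show ?thesis .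
next
  case False
  have "(1+\<bar>x\<bar>)^q \<le> (2*\<bar>x\<bar>)^q" by (rule power_mono) (use False in simp_all)
  also have "\<dots> = 2^q*\<bar>x\<bar>^q" by (simp add: power_mult_distrib)
  also have "\<dots> \<le> 2^q*(1+\<bar>x\<bar>^q)" by simp
  finally show ?thesis .
qed

context SS begin

lemma chain_formula:
  assumes lam: "0 \<le> lam" "lam \<le> b" and qG: "Q {0..b} k G" and km: "k \<le> m"
  shows "n \<le> k \<Longrightarrow> (deriv^^n) (\<lambda>y. G lam (resolvent lam f y)) = (\<lambda>y. Dit n G lam (resolvent lam f y))
     \<and> (n < k \<longrightarrow> (\<forall>x. (\<lambda>y. Dit n G lam (resolvent lam f y)) differentiable (at x)))"
proof (induction n)
  case 0 
  have b0: "0 \<le> b" using lam by simp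
  show ?case
  proof (intro conjI impI allI)
    show "(deriv ^^ 0) (\<lambda>y. G lam (resolvent lam f y)) = (\<lambda>y. Dit 0 G lam (resolvent lam f y))"
      by (simp add: Dit_def)
  next
    fix x assume k0: "0 < k"
    show "(\<lambda>y. Dit 0 G lam (resolvent lam f y)) differentiable (at x)"
    proof -
      let ?J = "resolvent lam f"
      have q: "Q {0..b} (Suc (k - 1)) G" using qG k0 by simp
      have "G lam differentiable (at (?J x))" using q lam unfolding QS by auto
      then have "DERIV (\<lambda>y. G lam (?J y)) x :> deriv (G lam) (?J x) * u lam (?J x)"
        by (intro DERIV_chain2[OF dd res_deriv]) (use lam k0 km in auto)
      then show ?thesis unfolding Dit_def using real_differentiable_def by auto
    qed
  qed
next
  case (Suc n)
  let ?J = "resolvent lam f"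
  have b0: "0 \<le> b" using lam by simp
  have IH: "(deriv^^n) (\<lambda>y. G lam (?J y)) = (\<lambda>y. Dit n G lam (?J y))" using Suc by simp
  have m1: "1 \<le> m" using Suc.prems km by simp
  have qn: "Q {0..b} (k - n) (Dit n G)" by (rule Q_Dit[OF b0 qG km]) (use Suc.prems in simp)
  have e: "k - n = Suc (k - Suc n)" using Suc.prems by simp
  have dn: "\<forall>l\<in>{0..b}. \<forall>y. Dit n G l differentiable (at y)" using qn unfolding e QS by blast
  have D: "\<And>x. DERIV (\<lambda>y. Dit n G lam (?J y)) x :> Dit (Suc n) G lam (?J x)"
  proof -
    fix x
    have "DERIV (\<lambda>y. Dit n G lam (?J y)) x :> deriv (Dit n G lam) (?J x) * u lam (?J x)"
      by (intro DERIV_chain2[OF dd res_deriv]) (use lam m1 dn in auto)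
    then show "DERIV (\<lambda>y. Dit n G lam (?J y)) x :> Dit (Suc n) G lam (?J x)"
      by (simp add: Dit_Suc Dop_def)
  qed
  have 1: "(deriv^^Suc n) (\<lambda>y. G lam (?J y)) = (\<lambda>y. Dit (Suc n) G lam (?J y))"
    using IH D DERIV_imp_deriv by (auto intro!: ext)
  show ?case
  proof (intro conjI impI allI 1)
    fix x assume sk: "Suc n < k"
    have qn': "Q {0..b} (k - Suc n) (Dit (Suc n) G)" by (rule Q_Dit[OF b0 qG km]) (use sk in simp)
    have e': "k - Suc n = Suc (k - Suc (Suc n))" using sk by simp
    have "Dit (Suc n) G lam differentiable (at (?J x))" using qn' lam unfolding e' QS by auto
    then have "DERIV (\<lambda>y. Dit (Suc n) G lam (?J y)) x :> deriv (Dit (Suc n) G lam) (?J x) * u lam (?J x)"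
      by (intro DERIV_chain2[OF dd res_deriv]) (use lam m1 in auto)
    then show "(\<lambda>y. Dit (Suc n) G lam (?J y)) differentiable (at x)" using real_differentiable_def by auto
  qed
qed

lemma Cm_comp:
  assumes lam: "0 \<le> lam" "lam \<le> b" and qG: "Q {0..b} m G"
  shows "Cm m (\<lambda>y. G lam (resolvent lam f y))"
  unfolding Cm_def
proof (intro conjI allI impI)
  fix n x assume n: "n < m"
  then show "(deriv ^^ n) (\<lambda>y. G lam (resolvent lam f y)) differentiable at x"
    using chain_formula[OF lam qG order_refl, of n] by simp
next
  have b0: "0 \<le> b" using lam by simp
  have q: "Q {0..b} 0 (Dit m G)" using Q_Dit[OF b0 qG order_refl order_refl] by simp
  then have c: "continuous_on ({0..b} \<times> UNIV) (\<lambda>z. Dit m G (fst z) (snd z))" by simp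
  have "continuous_on UNIV (\<lambda>y. Dit m G (fst (lam, resolvent lam f y)) (snd (lam, resolvent lam f y)))"
    by (rule continuous_on_compose2[OF c]) (use lam res_cont[OF lam(1)] in \<open>auto intro: continuous_intros\<close>)
  then show "continuous_on UNIV ((deriv ^^ m) (\<lambda>y. G lam (resolvent lam f y)))"
    using chain_formula[OF lam qG order_refl, of m] by simp
qed

end


theorem lemma4p4:
  fixes f :: "real \<Rightarrow> real" and m :: nat and p :: real
  assumes Cm_f: "Cm m f"
    and mono_f: "mono f"
    and p_nonneg: "p \<ge> 0"
    and growth: "\<exists>C. \<forall>n\<le>m. \<forall>x. \<bar>(deriv ^^ n) f x\<bar> \<le> C * (1 + \<bar>x\<bar> powr p)"
  shows "(\<forall>lam>0. Cm m (yosida lam f) \<and> Cm m (resolvent lam f))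
    \<and> (\<exists>q::nat. \<exists>C. \<forall>lam. 0 < lam \<and> lam \<le> 1 \<longrightarrow>
          (\<forall>n\<le>m. \<forall>x. \<bar>(deriv ^^ n) (yosida lam f) x\<bar> \<le> C * (1 + \<bar>x\<bar> ^ q)))
    \<and> (\<forall>n\<le>m. \<forall>x. ((\<lambda>lam. (deriv ^^ n) (yosida lam f) x) \<longlongrightarrow> (deriv ^^ n) f x) (at_right 0))"
proof -
  obtain C0 where C0: "\<forall>n\<le>m. \<forall>x. \<bar>(deriv^^n) f x\<bar> \<le> C0 * (1 + \<bar>x\<bar> powr p)" using growth by blast
  define N where "N = nat \<lceil>p\<rceil>"
  have C0nn: "0 \<le> C0" using C0[rule_format, of 0 0] by simp
  have g: "\<forall>n\<le>m. \<forall>x. \<bar>(deriv^^n) f x\<bar> \<le> (2*C0)*(1+\<bar>x\<bar>)^N"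
  proof (intro allI impI)
    fix n x assume n: "n \<le> m"
    have pN: "p \<le> real N" unfolding N_def by linarith
    have "\<bar>x\<bar> powr p \<le> (1+\<bar>x\<bar>) powr p" by (rule powr_mono2) (use p_nonneg in auto)
    also have "\<dots> \<le> (1+\<bar>x\<bar>) powr (real N)" by (rule powr_mono[OF pN]) simp
    also have "\<dots> = (1+\<bar>x\<bar>)^N" by (rule powr_realpow) simp
    finally have a: "\<bar>x\<bar> powr p \<le> (1+\<bar>x\<bar>)^N" .
    have b: "1 \<le> (1+\<bar>x\<bar>)^N" by simp
    have "1 + \<bar>x\<bar> powr p \<le> 2 * (1+\<bar>x\<bar>)^N" using a b by linarith
    then have "C0 * (1 + \<bar>x\<bar> powr p) \<le> C0 * (2 * (1+\<bar>x\<bar>)^N)" by (rule mult_left_mono[OF _ C0nn])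
    moreover have "\<bar>(deriv^^n) f x\<bar> \<le> C0 * (1 + \<bar>x\<bar> powr p)" using C0 n by blast
    moreover have "C0 * (2 * (1+\<bar>x\<bar>)^N) = (2*C0)*(1+\<bar>x\<bar>)^N" by simp
    ultimately show "\<bar>(deriv^^n) f x\<bar> \<le> (2*C0)*(1+\<bar>x\<bar>)^N" by linarith
  qed
  interpret SS f m
  proof
    show "Cm m f" by (rule Cm_f)
    show "mono f" by (rule mono_f)
    show "\<exists>C (q::nat). \<forall>n\<le>m. \<forall>x. \<bar>(deriv^^n) f x\<bar> \<le> C*(1+\<bar>x\<bar>)^q"
      using g by blast
  qed
  define F where "F = (\<lambda>(l::real) (y::real). f y)"
  have QF: "\<And>b. Q {0..b} m F" using Q_fd[of 0 m] by (simp add: F_def)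
  have yos: "\<And>lam. 0 < lam \<Longrightarrow> yosida lam f = (\<lambda>y. F lam (resolvent lam f y))"
    using yosida_eq by (simp add: F_def)
  have P1: "\<forall>lam>0. Cm m (yosida lam f) \<and> Cm m (resolvent lam f)"
  proof (intro allI impI conjI)
    fix lam :: real assume lam: "0 < lam"
    show "Cm m (yosida lam f)" using Cm_comp[of lam lam F, OF _ _ QF] lam yos by simp
    show "Cm m (resolvent lam f)" using Cm_comp[of lam lam "\<lambda>l y. y", OF _ _ Q_id] lam by simp
  qed
  have formula: "\<And>lam n x. 0 < lam \<Longrightarrow> lam \<le> 1 \<Longrightarrow> n \<le> m \<Longrightarrow>
      (deriv ^^ n) (yosida lam f) x = Dit n F lam (resolvent lam f x)"
  proof -
    fix lam :: real and n x assume lam: "0 < lam" "lam \<le> 1" and n: "n \<le> m"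
    have "(deriv^^n) (\<lambda>y. F lam (resolvent lam f y)) = (\<lambda>y. Dit n F lam (resolvent lam f y))"
      using chain_formula[of lam 1 m F n, OF _ _ QF order_refl] lam n by simp
    then show "(deriv ^^ n) (yosida lam f) x = Dit n F lam (resolvent lam f x)"
      using yos[OF lam(1)] by simp
  qed
  have P2: "\<exists>q::nat. \<exists>C. \<forall>lam. 0 < lam \<and> lam \<le> 1 \<longrightarrow>
          (\<forall>n\<le>m. \<forall>x. \<bar>(deriv ^^ n) (yosida lam f) x\<bar> \<le> C * (1 + \<bar>x\<bar> ^ q))"
  proof -
    have "\<forall>n\<le>m. polyb {0..1} (Dit n F)"
    proof (intro allI impI)
      fix n assume "n \<le> m"
      then have "Q {0..1} (m - n) (Dit n F)" by (intro Q_Dit QF) auto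
      then show "polyb {0..1} (Dit n F)" using Q0 by fastforce
    qed
    from polyb_fin[OF this] obtain C and q :: nat where
      Cq: "0 \<le> C" "\<forall>n\<le>m. \<forall>l\<in>{0..1}. \<forall>y. \<bar>Dit n F l y\<bar> \<le> C*(1+\<bar>y\<bar>)^q" by blast
    have "\<forall>lam. 0 < lam \<and> lam \<le> 1 \<longrightarrow>
          (\<forall>n\<le>m. \<forall>x. \<bar>(deriv ^^ n) (yosida lam f) x\<bar> \<le> (C * (1+\<bar>f 0\<bar>)^q * 2^q) * (1 + \<bar>x\<bar> ^ q))"
    proof (intro allI impI)
      fix lam :: real and n x assume lam: "0 < lam \<and> lam \<le> 1" and n: "n \<le> m"
      let ?z = "resolvent lam f x"
      have "\<bar>(deriv ^^ n) (yosida lam f) x\<bar> = \<bar>Dit n F lam ?z\<bar>" using formula lam n by simp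
      also have "\<dots> \<le> C*(1+\<bar>?z\<bar>)^q" using Cq lam n by auto
      also have "\<dots> \<le> C*(((1+\<bar>f 0\<bar>)*(1+\<bar>x\<bar>))^q)"
      proof (rule mult_left_mono[OF _ Cq(1)], rule power_mono)
        have "\<bar>?z\<bar> \<le> \<bar>x\<bar> + lam * \<bar>f 0\<bar>" using res_bound lam by simp
        moreover have "lam * \<bar>f 0\<bar> \<le> 1 * \<bar>f 0\<bar>" using lam by (intro mult_right_mono) auto
        moreover have "(1+\<bar>f 0\<bar>)*(1+\<bar>x\<bar>) = 1 + \<bar>x\<bar> + \<bar>f 0\<bar> + \<bar>f 0\<bar>*\<bar>x\<bar>" by (simp add: algebra_simps)
        moreover have "0 \<le> \<bar>f 0\<bar>*\<bar>x\<bar>" by simp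
        ultimately show "1+\<bar>?z\<bar> \<le> (1+\<bar>f 0\<bar>)*(1+\<bar>x\<bar>)" by linarith
      qed simp
      also have "\<dots> = C*(1+\<bar>f 0\<bar>)^q*(1+\<bar>x\<bar>)^q" by (simp add: power_mult_distrib mult.assoc)
      also have "\<dots> \<le> C*(1+\<bar>f 0\<bar>)^q*(2^q*(1+\<bar>x\<bar>^q))"
        by (rule mult_left_mono[OF pow_bound]) (use Cq(1) in simp)
      also have "\<dots> = (C * (1+\<bar>f 0\<bar>)^q * 2^q) * (1 + \<bar>x\<bar> ^ q)" by (simp add: mult.assoc)
      finally show "\<bar>(deriv ^^ n) (yosida lam f) x\<bar> \<le> (C * (1+\<bar>f 0\<bar>)^q * 2^q) * (1 + \<bar>x\<bar> ^ q)" .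
    qed
    then show ?thesis by blast
  qed
  have P3: "\<forall>n\<le>m. \<forall>x. ((\<lambda>lam. (deriv ^^ n) (yosida lam f) x) \<longlongrightarrow> (deriv ^^ n) f x) (at_right 0)"
  proof (intro allI impI)
    fix n x assume n: "n \<le> m"
    have ev01: "\<forall>\<^sub>F lam in at_right (0::real). 0 < lam \<and> lam \<le> 1"
      unfolding eventually_at_right_field by (intro exI[of _ 1]) auto
    have Jt: "((\<lambda>lam. resolvent lam f x) \<longlongrightarrow> x) (at_right 0)"
    proof (rule LIM_zero_cancel, rule tendsto_0_le[where K="\<bar>f x\<bar>"])
      show "((\<lambda>lam. lam) \<longlongrightarrow> (0::real)) (at_right 0)" by (rule tendsto_ident_at)
      show "\<forall>\<^sub>F lam in at_right 0. norm (resolvent lam f x - x) \<le> norm lam * \<bar>f x\<bar>"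
        using ev01 by eventually_elim (use res_close in auto)
    qed
    have gt: "((\<lambda>lam. (lam, resolvent lam f x)) \<longlongrightarrow> (0, x)) (at_right 0)"
      by (intro tendsto_Pair tendsto_ident_at Jt)
    have qn: "Q {0..1} (m - n) (Dit n F)" using n by (intro Q_Dit QF) auto
    then have c: "continuous_on ({0..1} \<times> UNIV) (\<lambda>z. Dit n F (fst z) (snd z))" using Q0 by fastforce
    have evs: "\<forall>\<^sub>F lam in at_right (0::real). (lam, resolvent lam f x) \<in> {0..1} \<times> UNIV"
      using ev01 by eventually_elim auto
    have "((\<lambda>lam. Dit n F (fst (lam, resolvent lam f x)) (snd (lam, resolvent lam f x)))
        \<longlongrightarrow> Dit n F (fst (0::real, x)) (snd (0::real, x))) (at_right 0)"
      by (rule continuous_on_tendsto_compose[OF c gt _ evs]) simp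
    then have t: "((\<lambda>lam. Dit n F lam (resolvent lam f x)) \<longlongrightarrow> (deriv^^n) f x) (at_right 0)"
      by (simp add: Dit_zero F_def)
    have "\<forall>\<^sub>F lam in at_right (0::real). Dit n F lam (resolvent lam f x) = (deriv ^^ n) (yosida lam f) x"
      using ev01 by eventually_elim (use formula n in auto)
    from Lim_transform_eventually[OF t this]
    show "((\<lambda>lam. (deriv ^^ n) (yosida lam f) x) \<longlongrightarrow> (deriv ^^ n) f x) (at_right 0)" .
  qed
  show ?thesis using P1 P2 P3 by blast
qed


end
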